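(* In $\mathrm{PG}(4,q)$ let $\alpha$ be a plane not contained in $\Sigma_\infty$ and containing no line of $\mathcal S$, and let $\mathcal N$ be a non-degenerate conic in $\alpha$. Then: (1) there is a Baer subplane $\mathcal B$ of $\mathrm{PG}(2,q^2)$ secant to $\ell_\infty$ with $[\mathcal B]=\alpha$, and an $\mathbb F_q$-conic $\mathcal C$ in $\mathcal B$ with $[\mathcal C]=\mathcal N$; (2) if $\mathcal N$ meets $\Sigma_\infty$ in a point of the spread line $[T]$, then $\bar T\in\mathcal C$; (3) if $\mathcal N$ is a $(PQ^q)$-special conic for distinct points $P,Q\in g$, then the $\mathbb F_{q^2}$-conic $\mathcal C^+$ meets $\ell_\infty$ in the points $\bar P,\bar Q$.
   Context: Bruck–Bose setting: $q$ a prime power; $\Sigma_\infty$ a hyperplane of $\mathrm{PG}(4,q)$ with regular spread $\mathcal S$; affine points $A$ of $\mathrm{PG}(2,q^2)$ correspond to points $[A]$ of $\mathrm{PG}(4,q)\setminus\Sigma_\infty$, points $\bar T\in\ell_\infty$ to spread lines $[T]$, lines $\ne\ell_\infty$ to planes not in $\Sigma_\infty$ containing a spread line. In $\mathrm{PG}(4,q^2)$ the transversals of $\mathcal S$ are conjugate lines $g,g^q$ (conjugation $X\mapsto X^q$ on coordinates) with $[T]^\star=TT^q$, $T=[T]^\star\cap g$, giving a bijection $\bar T\leftrightarrow T$ between $\ell_\infty$ and $g$; $\mathcal V^\star$ denotes the extension to $\mathrm{PG}(4,q^2)$. An $\mathbb F_{q^2}$-conic is a non-degenerate conic of $\mathrm{PG}(2,q^2)$;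 an $\mathbb F_q$-conic is a non-degenerate conic of a Baer subplane; $\mathcal C^+$ is the unique $\mathbb F_{q^2}$-conic containing the $\mathbb F_q$-conic $\mathcal C$. For a Baer subplane $\mathcal B$ secant to $\ell_\infty$, $[\mathcal B]$ is the plane of $\mathrm{PG}(4,q)$ whose affine points are $[X]$, $X$ affine in $\mathcal B$; for $\mathcal C\subset \mathcal B$, $[\mathcal C]$ is the closure in $[\mathcal B]$ of $\{[X]:X\in\mathcal C\text{ affine}\}$. A non-degenerate conic $\mathcal N$ of $\mathrm{PG}(4,q)$ is $(PQ^q)$-special if $\mathcal N^\star$ contains one point of the line $PQ^q$ and one point of the line $P^qQ$. *)

theory Defs
  imports "HOL-Analysis.Analysis"
begin

text \<open>The field 'a is GF(q^2);
GF(q) is the fixed field of x \<mapsto> x^q.  PG(2,q^2) uses vectors in 'a^3, with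
l_infinity the line z = 0.  PG(4,q) is realised as the 5-dimensional GF(q)-space
V = {(x,y,z) : x,y in GF(q^2), z in GF(q)} (points = 1-dim GF(q)-subspaces),
Sigma_infinity = {z = 0}, with the regular (Desarguesian) spread whose line [T]
for T = <(a,b,0)> in l_infinity consists of the GF(q)-points <(l a, l b, 0)>.
The affine point <(x,y,1)> of PG(2,q^2) corresponds to the point <(x,y,1)>_GF(q).
PG(4,q^2) = V tensor GF(q^2) is realised as 'a^5 via
v = (x,y,z) \<mapsto> (x, y, x^q, y^q, z); the conjugation fixing V is
(u1,u2,w1,w2,z) \<mapsto> (w1^q, w2^q, u1^q, u2^q, z^q), and the two transversals of
the spread are g = {u3 = u4 = u5 = 0} and g^q = {u1 = u2 = u5 = 0}.
All projective points are represented as the corresponding 1-dimensional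
subspaces (sets of vectors, including 0).\<close>

definition Fq :: "nat \<Rightarrow> 'a::field set" where
  "Fq q = {x. x ^ q = x}"

definition P2 :: "'a::field ^ 3 \<Rightarrow> ('a ^ 3) set" where
  "P2 v = range (\<lambda>c. c *s v)"

definition pts2 :: "('a::field ^ 3) set set" where
  "pts2 = {P2 v | v. v \<noteq> 0}"

definition linf :: "('a::field ^ 3) set set" where
  "linf = {P2 v | v. v \<noteq> 0 \<and> v $ 3 = 0}"

text \<open>Baer subplane with coordinate matrix M (every Baer subplane is the image of
PG(2,q) under a projectivity of PG(2,q^2)).\<close>
definition baer :: "nat \<Rightarrow> 'a::field ^ 3 ^ 3 \<Rightarrow> ('a ^ 3) set set" where
  "baer q M = {P2 (M *v v) | v. v \<noteq> 0 \<and> (\<forall>i. v $ i \<in> Fq q)}"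

definition is_baer :: "nat \<Rightarrow> ('a::field ^ 3) set set \<Rightarrow> bool" where
  "is_baer q B \<longleftrightarrow> (\<exists>M. det M \<noteq> 0 \<and> B = baer q M)"

definition baer_secant :: "nat \<Rightarrow> ('a::field ^ 3) set set \<Rightarrow> bool" where
  "baer_secant q B \<longleftrightarrow> is_baer q B \<and> card (B \<inter> linf) = q + 1"

definition qf :: "'a::comm_ring_1 ^ 3 ^ 3 \<Rightarrow> 'a ^ 3 \<Rightarrow> 'a" where
  "qf A w = (\<Sum>i\<in>UNIV. \<Sum>j\<in>UNIV. A $ i $ j * w $ i * w $ j)"

text \<open>Discriminant of the form sum a_ii x_i^2 + sum_{i<j} a_ij x_i x_j; it is
nonzero iff the conic is non-degenerate (valid in every characteristic).\<close>
definition disc :: "'a::comm_ring_1 ^ 3 ^ 3 \<Rightarrow> 'a" where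
  "disc A = (let a11 = A$1$1; a22 = A$2$2; a33 = A$3$3;
                 a12 = A$1$2 + A$2$1; a13 = A$1$3 + A$3$1; a23 = A$2$3 + A$3$2
             in 4 * a11 * a22 * a33 + a12 * a13 * a23
                - a11 * a23^2 - a22 * a13^2 - a33 * a12^2)"

definition form_over :: "nat \<Rightarrow> 'a::field ^ 3 ^ 3 \<Rightarrow> bool" where
  "form_over q A \<longleftrightarrow> (\<forall>i j. A $ i $ j \<in> Fq q)"

text \<open>F_q-conic of the Baer subplane baer q M with (B-coordinate) form A,
and its F_{q^2}-extension C^+.\<close>
definition baer_conic :: "nat \<Rightarrow> 'a::field ^ 3 ^ 3 \<Rightarrow> 'a ^ 3 ^ 3 \<Rightarrow> ('a ^ 3) set set" where
  "baer_conic q M A = {P2 (M *v v) | v. v \<noteq> 0 \<and> (\<forall>i. v $ i \<in> Fq q) \<and> qf A v = 0}"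

definition baer_conic_plus :: "'a::field ^ 3 ^ 3 \<Rightarrow> 'a ^ 3 ^ 3 \<Rightarrow> ('a ^ 3) set set" where
  "baer_conic_plus M A = {P2 (M *v w) | w. w \<noteq> 0 \<and> qf A w = 0}"

definition Vq :: "nat \<Rightarrow> ('a::field ^ 3) set" where
  "Vq q = {v. v $ 3 \<in> Fq q}"

definition P4 :: "nat \<Rightarrow> 'a::field ^ 3 \<Rightarrow> ('a ^ 3) set" where
  "P4 q v = (\<lambda>c. c *s v) ` Fq q"

definition pts4 :: "nat \<Rightarrow> ('a::field ^ 3) set set" where
  "pts4 q = {P4 q v | v. v \<in> Vq q \<and> v \<noteq> 0}"

definition sigma_inf :: "nat \<Rightarrow> ('a::field ^ 3) set set" where
  "sigma_inf q = {P4 q v | v. v \<noteq> 0 \<and> v $ 3 = 0}"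

definition spread :: "nat \<Rightarrow> ('a::field ^ 3) set \<Rightarrow> ('a ^ 3) set set" where
  "spread q T = {P4 q u | u. u \<noteq> 0 \<and> P2 u = T}"

definition bbset :: "nat \<Rightarrow> ('a::field ^ 3) set set \<Rightarrow> ('a ^ 3) set set" where
  "bbset q S = {P4 q v | v. v $ 3 = 1 \<and> P2 v \<in> S}"

definition comb :: "'a::field ^ 3 ^ 3 \<Rightarrow> 'a ^ 3 \<Rightarrow> 'a ^ 3" where
  "comb b w = (\<Sum>i\<in>UNIV. (w $ i) *s (b $ i))"

definition is_plane4 :: "nat \<Rightarrow> 'a::field ^ 3 ^ 3 \<Rightarrow> bool" where
  "is_plane4 q b \<longleftrightarrow> (\<forall>i. b $ i \<in> Vq q) \<and>
     (\<forall>w. (\<forall>i. w $ i \<in> Fq q) \<and> comb b w = 0 \<longrightarrow> w = 0)"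

definition plane_pts :: "nat \<Rightarrow> 'a::field ^ 3 ^ 3 \<Rightarrow> ('a ^ 3) set set" where
  "plane_pts q b = {P4 q (comb b w) | w. w \<noteq> 0 \<and> (\<forall>i. w $ i \<in> Fq q)}"

definition conic4 :: "nat \<Rightarrow> 'a::field ^ 3 ^ 3 \<Rightarrow> 'a ^ 3 ^ 3 \<Rightarrow> ('a ^ 3) set set" where
  "conic4 q b A = {P4 q (comb b w) | w. w \<noteq> 0 \<and> (\<forall>i. w $ i \<in> Fq q) \<and> qf A w = 0}"

definition nondeg_conic4 :: "nat \<Rightarrow> 'a::field ^ 3 ^ 3 \<Rightarrow> 'a ^ 3 ^ 3 \<Rightarrow> bool" where
  "nondeg_conic4 q b A \<longleftrightarrow> is_plane4 q b \<and> form_over q A \<and> disc A \<noteq> 0"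

definition P5 :: "'a::field ^ 5 \<Rightarrow> ('a ^ 5) set" where
  "P5 u = range (\<lambda>c. c *s u)"

definition emb :: "nat \<Rightarrow> 'a::field ^ 3 \<Rightarrow> 'a ^ 5" where
  "emb q v = vector [v $ 1, v $ 2, (v $ 1) ^ q, (v $ 2) ^ q, v $ 3]"

definition conj5 :: "nat \<Rightarrow> 'a::field ^ 5 \<Rightarrow> 'a ^ 5" where
  "conj5 q u = vector [(u $ 3) ^ q, (u $ 4) ^ q, (u $ 1) ^ q, (u $ 2) ^ q, (u $ 5) ^ q]"

definition cpt :: "nat \<Rightarrow> ('a::field ^ 5) set \<Rightarrow> ('a ^ 5) set" where
  "cpt q X = conj5 q ` X"

definition join5 :: "('a::field ^ 5) set \<Rightarrow> ('a ^ 5) set \<Rightarrow> ('a ^ 5) set set" where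
  "join5 X Y = {P5 x | x. x \<noteq> 0 \<and> (\<exists>u\<in>X. \<exists>v\<in>Y. x = u + v)}"

definition gpts :: "('a::field ^ 5) set set" where
  "gpts = {P5 u | u. u \<noteq> 0 \<and> u $ 3 = 0 \<and> u $ 4 = 0 \<and> u $ 5 = 0}"

definition conic4_ext :: "nat \<Rightarrow> 'a::field ^ 3 ^ 3 \<Rightarrow> 'a ^ 3 ^ 3 \<Rightarrow> ('a ^ 5) set set" where
  "conic4_ext q b A = {P5 (\<Sum>i\<in>UNIV. (w $ i) *s emb q (b $ i)) | w. w \<noteq> 0 \<and> qf A w = 0}"

definition ext_spread :: "nat \<Rightarrow> ('a::field ^ 3) set \<Rightarrow> ('a ^ 5) set set" where
  "ext_spread q T = {X. \<exists>u v. P4 q u \<in> spread q T \<and> P4 q v \<in> spread q T \<and> P4 q u \<noteq> P4 q v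
                          \<and> X \<in> join5 (P5 (emb q u)) (P5 (emb q v))}"

definition corr :: "nat \<Rightarrow> ('a::field ^ 3) set \<Rightarrow> ('a ^ 5) set \<Rightarrow> bool" where
  "corr q Tb P \<longleftrightarrow> Tb \<in> linf \<and> ext_spread q Tb \<inter> gpts = {P}"

definition special :: "nat \<Rightarrow> 'a::field ^ 3 ^ 3 \<Rightarrow> 'a ^ 3 ^ 3 \<Rightarrow> ('a ^ 5) set \<Rightarrow> ('a ^ 5) set \<Rightarrow> bool" where
  "special q b A P Q \<longleftrightarrow> nondeg_conic4 q b A \<and>
     (\<exists>X. X \<in> conic4_ext q b A \<and> X \<in> join5 P (cpt q Q)) \<and>
     (\<exists>Y. Y \<in> conic4_ext q b A \<and> Y \<in> join5 (cpt q P) Q)"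

end

theory Submission
  imports Defs "HOL-Number_Theory.Residues"
begin


locale setting =
  fixes q :: nat and b A :: "'a::{field,finite} ^ 3 ^ 3"
  assumes q_pp: "\<exists>p k. prime p \<and> k \<ge> 1 \<and> q = p ^ k"
    and card: "CARD('a) = q ^ 2"
    and N: "nondeg_conic4 q b A"
    and not_inf: "\<not> plane_pts q b \<subseteq> sigma_inf q"
    and no_spread: "\<forall>T\<in>linf. \<not> spread q T \<subseteq> plane_pts q b"
begin

lemma char_q: "prime CHAR('a) \<and> (\<exists>k. q = CHAR('a) ^ k) \<and> q \<ge> 2"
proof -
  obtain p k where p: "prime p" "k \<ge> 1" "q = p ^ k" using q_pp by blast
  have pc: "prime CHAR('a)"
    by (rule prime_CHAR_semidom) (rule finite_imp_CHAR_pos, simp)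
  have "CHAR('a) dvd p ^ (2*k)" using CHAR_dvd_CARD[where 'a='a] card p(3)
    by (simp add: power_mult[symmetric] mult.commute)
  then have "CHAR('a) dvd p" using pc prime_dvd_power by blast
  then have "CHAR('a) = p" using pc p(1) primes_dvd_imp_eq by blast
  moreover have "q \<ge> 2"
  proof -
    have "p \<ge> 2" using p(1) prime_ge_2_nat by blast
    then have "p ^ 1 \<le> p ^ k" using p(2) by (intro power_increasing) auto
    then show ?thesis using \<open>p \<ge> 2\<close> p(3) by simp
  qed
  ultimately show ?thesis using pc p(3) by blast
qed

lemma q_pos: "q > 0" using char_q by auto

lemma frob_add: "((x::'a) + y) ^ q = x ^ q + y ^ q"
proof -
  obtain k where "q = CHAR('a) ^ k" using char_q by blast
  then show ?thesis using char_q freshmans_dream' by blast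
qed

lemma pow_card: "(x::'a) ^ CARD('a) = x"
proof (cases "x = 0")
  case False
  have "x * (\<Prod>y\<in>UNIV-{0}. x * y) = x * x ^ (card (UNIV :: 'a set) - 1) * \<Prod>(UNIV-{0::'a})"
    by (simp add: prod.distrib mult_ac)
  also have "x * x ^ (card (UNIV :: 'a set) - 1) = x ^ Suc (card (UNIV :: 'a set) - 1)"
    by (subst power_Suc) auto
  also have "Suc (card (UNIV :: 'a set) - 1) = card (UNIV :: 'a set)"
    using finite_UNIV_card_ge_0[where ?'a = 'a] by simp
  also have "(\<Prod>y\<in>UNIV-{0}. x * y) = (\<Prod>y\<in>UNIV-{0}. y)"
    by (rule prod.reindex_bij_witness[of _ "\<lambda>y. y / x" "\<lambda>y. x * y"]) (use False in auto)
  finally show ?thesis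
    by simp
qed (use finite_UNIV_card_ge_0[where ?'a = 'a] in auto)

lemma frob_invol: "((x::'a) ^ q) ^ q = x"
  using pow_card[of x] card by (simp add: power_mult[symmetric] power2_eq_square)

lemma frob_zero: "(0::'a) ^ q = 0" using q_pos by simp

lemma frob_neg: "(- (x::'a)) ^ q = - (x ^ q)"
proof -
  have "(x + - x) ^ q = x ^ q + (- x) ^ q" by (rule frob_add)
  then show ?thesis using frob_zero by (simp add: eq_neg_iff_add_eq_0 add.commute)
qed

lemma frob_diff: "((x::'a) - y) ^ q = x ^ q - y ^ q"
  using frob_add[of x "-y"] frob_neg[of y] by simp

lemma Fq_iff: "(x::'a) \<in> Fq q \<longleftrightarrow> x ^ q = x" by (simp add: Fq_def)

lemma Fq_0[simp]: "(0::'a) \<in> Fq q" using frob_zero Fq_iff by simp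
lemma Fq_1[simp]: "(1::'a) \<in> Fq q" by (simp add: Fq_iff)
lemma Fq_add[intro]: "(x::'a) \<in> Fq q \<Longrightarrow> y \<in> Fq q \<Longrightarrow> x + y \<in> Fq q" by (simp add: Fq_iff frob_add)
lemma Fq_neg[intro]: "(x::'a) \<in> Fq q \<Longrightarrow> - x \<in> Fq q" by (simp add: Fq_iff frob_neg)
lemma Fq_diff[intro]: "(x::'a) \<in> Fq q \<Longrightarrow> y \<in> Fq q \<Longrightarrow> x - y \<in> Fq q" by (simp add: Fq_iff frob_diff)
lemma Fq_mult[intro]: "(x::'a) \<in> Fq q \<Longrightarrow> y \<in> Fq q \<Longrightarrow> x * y \<in> Fq q" by (simp add: Fq_iff power_mult_distrib)
lemma Fq_divide[intro]: "(x::'a) \<in> Fq q \<Longrightarrow> y \<in> Fq q \<Longrightarrow> x / y \<in> Fq q" by (simp add: Fq_iff power_divide)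
lemma Fq_inverse[intro]: "(x::'a) \<in> Fq q \<Longrightarrow> inverse x \<in> Fq q" by (simp add: Fq_iff power_inverse)

lemma decomp:
  assumes mu: "(mu::'a) \<notin> Fq q"
  shows "\<exists>s t. s \<in> Fq q \<and> t \<in> Fq q \<and> l = s + t * mu"
proof -
  have d: "mu - mu ^ q \<noteq> 0" using mu by (simp add: Fq_iff)
  define t where "t = (l - l ^ q) / (mu - mu ^ q)"
  define s where "s = l - t * mu"
  have tq: "t ^ q = t"
  proof -
    have "t ^ q = (l ^ q - l) / (mu ^ q - mu)"
      by (simp add: t_def power_divide frob_diff frob_invol)
    also have "\<dots> = t" unfolding t_def by (metis minus_diff_eq minus_divide_divide)
    finally show ?thesis .
  qed
  have "s ^ q = l ^ q - t * mu ^ q"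
    by (simp add: s_def frob_diff power_mult_distrib tq)
  also have "\<dots> = s"
  proof -
    have "t * (mu - mu ^ q) = l - l ^ q" using d by (simp add: t_def)
    then show ?thesis by (simp add: s_def algebra_simps)
  qed
  finally have "s ^ q = s" .
  then show ?thesis using tq by (intro exI[of _ s] exI[of _ t]) (simp add: Fq_iff s_def)
qed

end


lemma qf_expand:
  fixes A :: "'a::comm_ring_1^3^3"
  shows "qf A (x *s u + y *s v) = x^2 * qf A u + x*y*(qf A (u+v) - qf A u - qf A v) + y^2 * qf A v"
  unfolding qf_def by (simp add: sum_3 algebra_simps power2_eq_square)

lemma qf_scale: "qf (A::'a::comm_ring_1^3^3) (c *s w) = c^2 * qf A w"
  unfolding qf_def by (simp add: sum_3 algebra_simps power2_eq_square)

lemma qf_3: "qf (A::'a::comm_ring_1^3^3) w = A$1$1*w$1^2 + A$2$2*w$2^2 + A$3$3*w$3^2 + (A$1$2+A$2$1)*w$1*w$2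
   + (A$1$3+A$3$1)*w$1*w$3 + (A$2$3+A$3$2)*w$2*w$3"
  unfolding qf_def by (simp add: sum_3 algebra_simps power2_eq_square)

lemma line_disc1:
  fixes a11 a22 a33 a12 a13 a23 b1 b2 b3 :: "'a::field"
  assumes "a22*b1^2 = b2*(a12*b1 - a11*b2)" "a33*b1^2 = b3*(a13*b1 - a11*b3)"
     "a23*b1^2 = b1*(a12*b3 + a13*b2) - 2*a11*b2*b3" "b1 \<noteq> 0"
  shows "4 * a11 * a22 * a33 + a12 * a13 * a23 - a11 * a23^2 - a22 * a13^2 - a33 * a12^2 = 0"
proof -
  have "b1^4 * (4 * a11 * a22 * a33 + a12 * a13 * a23 - a11 * a23^2 - a22 * a13^2 - a33 * a12^2) = 0"
    using assms(1-3) by Groebner_Basis.algebra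
  then show ?thesis using assms(4) by simp
qed

lemma disc_3: "disc (A::'a::comm_ring_1^3^3) = 4 * A$1$1 * A$2$2 * A$3$3 + (A$1$2+A$2$1) * (A$1$3+A$3$1) * (A$2$3+A$3$2)
   - A$1$1 * (A$2$3+A$3$2)^2 - A$2$2 * (A$1$3+A$3$1)^2 - A$3$3 * (A$1$2+A$2$1)^2"
  unfolding disc_def Let_def by simp

definition dotv :: "'a::comm_ring_1^3 \<Rightarrow> 'a^3 \<Rightarrow> 'a" where
  "dotv be w = (\<Sum>i\<in>UNIV. w$i * be$i)"

lemma dotv_3: "dotv be w = w$1*be$1 + w$2*be$2 + w$3*be$3"
  unfolding dotv_def by (simp add: sum_3)

definition basis_prop :: "'a::field set \<Rightarrow> 'a^3 \<Rightarrow> 'a^3 \<Rightarrow> 'a^3 \<Rightarrow> bool" where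
  "basis_prop S be u1 u2 \<longleftrightarrow> dotv be u1 = 0 \<and> dotv be u2 = 0 \<and> (\<forall>i. u1$i \<in> S) \<and> (\<forall>i. u2$i \<in> S)
    \<and> (\<forall>x y. x *s u1 + y *s u2 = 0 \<longrightarrow> x = 0 \<and> y = 0)
    \<and> (\<forall>w. dotv be w = 0 \<longrightarrow> (\<exists>x y. w = x *s u1 + y *s u2 \<and> ((\<forall>i. w$i \<in> S) \<longrightarrow> x \<in> S \<and> y \<in> S)))
    \<and> (\<forall>A. qf A u1 = 0 \<and> qf A u2 = 0 \<and> qf A (u1+u2) = 0 \<longrightarrow> disc A = 0)"

lemma basis1:
  fixes be :: "'a::field^3" and S :: "'a set"
  assumes b1: "be$1 \<noteq> 0" and bS: "\<forall>i. be$i \<in> S"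
    and S0: "0 \<in> S" and Sneg: "\<forall>x\<in>S. -x \<in> S" and Sdiv: "\<forall>x\<in>S. \<forall>y\<in>S. x / y \<in> S"
  shows "basis_prop S be (vector [-be$2, be$1, 0]) (vector [-be$3, 0, be$1])"
proof -
  let ?u1 = "vector [-be$2, be$1, 0] :: 'a^3" and ?u2 = "vector [-be$3, 0, be$1] :: 'a^3"
  have d1: "dotv be ?u1 = 0" "dotv be ?u2 = 0" by (simp_all add: dotv_3 algebra_simps)
  have S: "\<forall>i. ?u1$i \<in> S" "\<forall>i. ?u2$i \<in> S" using bS S0 Sneg by (auto simp: forall_3)
  have ind: "\<forall>x y. x *s ?u1 + y *s ?u2 = 0 \<longrightarrow> x = 0 \<and> y = 0"
  proof (intro allI impI)
    fix x y assume "x *s ?u1 + y *s ?u2 = 0"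
    then have "(x *s ?u1 + y *s ?u2)$2 = 0" "(x *s ?u1 + y *s ?u2)$3 = 0" by simp_all
    then show "x = 0 \<and> y = 0" using b1 by simp
  qed
  have sp: "\<forall>w. dotv be w = 0 \<longrightarrow> (\<exists>x y. w = x *s ?u1 + y *s ?u2 \<and> ((\<forall>i. w$i \<in> S) \<longrightarrow> x \<in> S \<and> y \<in> S))"
  proof (intro allI impI)
    fix w assume w: "dotv be w = 0"
    have "w = (w$2/be$1) *s ?u1 + (w$3/be$1) *s ?u2"
    proof -
      have "w$1 * be$1 = - (w$2*be$2 + w$3*be$3)" using w unfolding dotv_3 by Groebner_Basis.algebra
      then have "w$1 = - (w$2*be$2 + w$3*be$3) / be$1" using b1 by (simp add: field_simps)
      then show ?thesis using b1 by (simp add: vec_eq_iff forall_3 field_simps)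
    qed
    moreover have "(\<forall>i. w$i \<in> S) \<longrightarrow> w$2/be$1 \<in> S \<and> w$3/be$1 \<in> S" using Sdiv bS by blast
    ultimately show "\<exists>x y. w = x *s ?u1 + y *s ?u2 \<and> ((\<forall>i. w$i \<in> S) \<longrightarrow> x \<in> S \<and> y \<in> S)" by blast
  qed
  have dc: "\<forall>A. qf A ?u1 = 0 \<and> qf A ?u2 = 0 \<and> qf A (?u1+?u2) = 0 \<longrightarrow> disc A = 0"
  proof (intro allI impI)
    fix A :: "'a^3^3" assume h: "qf A ?u1 = 0 \<and> qf A ?u2 = 0 \<and> qf A (?u1+?u2) = 0"
    let ?a11 = "A$1$1" and ?a22 = "A$2$2" and ?a33 = "A$3$3" and ?a12 = "A$1$2+A$2$1"
      and ?a13 = "A$1$3+A$3$1" and ?a23 = "A$2$3+A$3$2" and ?b1 = "be$1" and ?b2 = "be$2" and ?b3 = "be$3"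
    have e1: "?a11*?b2^2 + ?a22*?b1^2 - ?a12*?b1*?b2 = 0" using h by (simp add: qf_3 algebra_simps power2_eq_square)
    have e2: "?a11*?b3^2 + ?a33*?b1^2 - ?a13*?b1*?b3 = 0" using h by (simp add: qf_3 algebra_simps power2_eq_square)
    have e3: "?a11*(?b2+?b3)^2 + ?a22*?b1^2 + ?a33*?b1^2 - ?a12*(?b2+?b3)*?b1 - ?a13*(?b2+?b3)*?b1 + ?a23*?b1*?b1 = 0"
      using h by (simp add: qf_3 algebra_simps power2_eq_square)
    have f1: "?a22*?b1^2 = ?b2*(?a12*?b1 - ?a11*?b2)" using e1 by Groebner_Basis.algebra
    have f2: "?a33*?b1^2 = ?b3*(?a13*?b1 - ?a11*?b3)" using e2 by Groebner_Basis.algebra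
    have f3: "?a23*?b1^2 = ?b1*(?a12*?b3 + ?a13*?b2) - 2*?a11*?b2*?b3" using e1 e2 e3 by Groebner_Basis.algebra
    have "4 * ?a11 * ?a22 * ?a33 + ?a12 * ?a13 * ?a23 - ?a11 * ?a23^2 - ?a22 * ?a13^2 - ?a33 * ?a12^2 = 0"
      by (rule line_disc1[OF f1 f2 f3 b1])
    then show "disc A = 0" unfolding disc_3 by (simp add: algebra_simps)
  qed
  show ?thesis unfolding basis_prop_def using d1 S ind sp dc by blast
qed

lemma basis2:
  fixes be :: "'a::field^3" and S :: "'a set"
  assumes b1: "be$2 \<noteq> 0" and bS: "\<forall>i. be$i \<in> S"
    and S0: "0 \<in> S" and Sneg: "\<forall>x\<in>S. -x \<in> S" and Sdiv: "\<forall>x\<in>S. \<forall>y\<in>S. x / y \<in> S"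
  shows "basis_prop S be (vector [be$2, -be$1, 0]) (vector [0, -be$3, be$2])"
proof -
  let ?u1 = "vector [be$2, -be$1, 0] :: 'a^3" and ?u2 = "vector [0, -be$3, be$2] :: 'a^3"
  have d1: "dotv be ?u1 = 0" "dotv be ?u2 = 0" by (simp_all add: dotv_3 algebra_simps)
  have S: "\<forall>i. ?u1$i \<in> S" "\<forall>i. ?u2$i \<in> S" using bS S0 Sneg by (auto simp: forall_3)
  have ind: "\<forall>x y. x *s ?u1 + y *s ?u2 = 0 \<longrightarrow> x = 0 \<and> y = 0"
  proof (intro allI impI)
    fix x y assume "x *s ?u1 + y *s ?u2 = 0"
    then have "(x *s ?u1 + y *s ?u2)$1 = 0" "(x *s ?u1 + y *s ?u2)$3 = 0" by simp_all
    then show "x = 0 \<and> y = 0" using b1 by simp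
  qed
  have sp: "\<forall>w. dotv be w = 0 \<longrightarrow> (\<exists>x y. w = x *s ?u1 + y *s ?u2 \<and> ((\<forall>i. w$i \<in> S) \<longrightarrow> x \<in> S \<and> y \<in> S))"
  proof (intro allI impI)
    fix w assume w: "dotv be w = 0"
    have "w = (w$1/be$2) *s ?u1 + (w$3/be$2) *s ?u2"
    proof -
      have "w$2 * be$2 = - (w$1*be$1 + w$3*be$3)" using w unfolding dotv_3 by Groebner_Basis.algebra
      then have "w$2 = - (w$1*be$1 + w$3*be$3) / be$2" using b1 by (simp add: field_simps)
      then show ?thesis using b1 by (simp add: vec_eq_iff forall_3 field_simps)
    qed
    moreover have "(\<forall>i. w$i \<in> S) \<longrightarrow> w$1/be$2 \<in> S \<and> w$3/be$2 \<in> S" using Sdiv bS by blast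
    ultimately show "\<exists>x y. w = x *s ?u1 + y *s ?u2 \<and> ((\<forall>i. w$i \<in> S) \<longrightarrow> x \<in> S \<and> y \<in> S)" by blast
  qed
  have dc: "\<forall>A. qf A ?u1 = 0 \<and> qf A ?u2 = 0 \<and> qf A (?u1+?u2) = 0 \<longrightarrow> disc A = 0"
  proof (intro allI impI)
    fix A :: "'a^3^3" assume h: "qf A ?u1 = 0 \<and> qf A ?u2 = 0 \<and> qf A (?u1+?u2) = 0"
    let ?a11 = "A$2$2" and ?a22 = "A$1$1" and ?a33 = "A$3$3" and ?a12 = "A$1$2+A$2$1"
      and ?a13 = "A$2$3+A$3$2" and ?a23 = "A$1$3+A$3$1" and ?b1 = "be$2" and ?b2 = "be$1" and ?b3 = "be$3"
    have e1: "?a11*?b2^2 + ?a22*?b1^2 - ?a12*?b1*?b2 = 0" using h by (simp add: qf_3 algebra_simps power2_eq_square)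
    have e2: "?a11*?b3^2 + ?a33*?b1^2 - ?a13*?b1*?b3 = 0" using h by (simp add: qf_3 algebra_simps power2_eq_square)
    have e3: "?a11*(?b2+?b3)^2 + ?a22*?b1^2 + ?a33*?b1^2 - ?a12*(?b2+?b3)*?b1 - ?a13*(?b2+?b3)*?b1 + ?a23*?b1*?b1 = 0"
      using h by (simp add: qf_3 algebra_simps power2_eq_square)
    have f1: "?a22*?b1^2 = ?b2*(?a12*?b1 - ?a11*?b2)" using e1 by Groebner_Basis.algebra
    have f2: "?a33*?b1^2 = ?b3*(?a13*?b1 - ?a11*?b3)" using e2 by Groebner_Basis.algebra
    have f3: "?a23*?b1^2 = ?b1*(?a12*?b3 + ?a13*?b2) - 2*?a11*?b2*?b3" using e1 e2 e3 by Groebner_Basis.algebra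
    have "4 * ?a11 * ?a22 * ?a33 + ?a12 * ?a13 * ?a23 - ?a11 * ?a23^2 - ?a22 * ?a13^2 - ?a33 * ?a12^2 = 0"
      by (rule line_disc1[OF f1 f2 f3 b1])
    then show "disc A = 0" unfolding disc_3 by (simp add: algebra_simps)
  qed
  show ?thesis unfolding basis_prop_def using d1 S ind sp dc by blast
qed

lemma basis3:
  fixes be :: "'a::field^3" and S :: "'a set"
  assumes b1: "be$3 \<noteq> 0" and bS: "\<forall>i. be$i \<in> S"
    and S0: "0 \<in> S" and Sneg: "\<forall>x\<in>S. -x \<in> S" and Sdiv: "\<forall>x\<in>S. \<forall>y\<in>S. x / y \<in> S"
  shows "basis_prop S be (vector [be$3, 0, -be$1]) (vector [0, be$3, -be$2])"
proof -
  let ?u1 = "vector [be$3, 0, -be$1] :: 'a^3" and ?u2 = "vector [0, be$3, -be$2] :: 'a^3"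
  have d1: "dotv be ?u1 = 0" "dotv be ?u2 = 0" by (simp_all add: dotv_3 algebra_simps)
  have S: "\<forall>i. ?u1$i \<in> S" "\<forall>i. ?u2$i \<in> S" using bS S0 Sneg by (auto simp: forall_3)
  have ind: "\<forall>x y. x *s ?u1 + y *s ?u2 = 0 \<longrightarrow> x = 0 \<and> y = 0"
  proof (intro allI impI)
    fix x y assume "x *s ?u1 + y *s ?u2 = 0"
    then have "(x *s ?u1 + y *s ?u2)$1 = 0" "(x *s ?u1 + y *s ?u2)$2 = 0" by simp_all
    then show "x = 0 \<and> y = 0" using b1 by simp
  qed
  have sp: "\<forall>w. dotv be w = 0 \<longrightarrow> (\<exists>x y. w = x *s ?u1 + y *s ?u2 \<and> ((\<forall>i. w$i \<in> S) \<longrightarrow> x \<in> S \<and> y \<in> S))"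
  proof (intro allI impI)
    fix w assume w: "dotv be w = 0"
    have "w = (w$1/be$3) *s ?u1 + (w$2/be$3) *s ?u2"
    proof -
      have "w$3 * be$3 = - (w$1*be$1 + w$2*be$2)" using w unfolding dotv_3 by Groebner_Basis.algebra
      then have "w$3 = - (w$1*be$1 + w$2*be$2) / be$3" using b1 by (simp add: field_simps)
      then show ?thesis using b1 by (simp add: vec_eq_iff forall_3 field_simps)
    qed
    moreover have "(\<forall>i. w$i \<in> S) \<longrightarrow> w$1/be$3 \<in> S \<and> w$2/be$3 \<in> S" using Sdiv bS by blast
    ultimately show "\<exists>x y. w = x *s ?u1 + y *s ?u2 \<and> ((\<forall>i. w$i \<in> S) \<longrightarrow> x \<in> S \<and> y \<in> S)" by blast
  qed
  have dc: "\<forall>A. qf A ?u1 = 0 \<and> qf A ?u2 = 0 \<and> qf A (?u1+?u2) = 0 \<longrightarrow> disc A = 0"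
  proof (intro allI impI)
    fix A :: "'a^3^3" assume h: "qf A ?u1 = 0 \<and> qf A ?u2 = 0 \<and> qf A (?u1+?u2) = 0"
    let ?a11 = "A$3$3" and ?a22 = "A$1$1" and ?a33 = "A$2$2" and ?a12 = "A$1$3+A$3$1"
      and ?a13 = "A$2$3+A$3$2" and ?a23 = "A$1$2+A$2$1" and ?b1 = "be$3" and ?b2 = "be$1" and ?b3 = "be$2"
    have e1: "?a11*?b2^2 + ?a22*?b1^2 - ?a12*?b1*?b2 = 0" using h by (simp add: qf_3 algebra_simps power2_eq_square)
    have e2: "?a11*?b3^2 + ?a33*?b1^2 - ?a13*?b1*?b3 = 0" using h by (simp add: qf_3 algebra_simps power2_eq_square)
    have e3: "?a11*(?b2+?b3)^2 + ?a22*?b1^2 + ?a33*?b1^2 - ?a12*(?b2+?b3)*?b1 - ?a13*(?b2+?b3)*?b1 + ?a23*?b1*?b1 = 0"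
      using h by (simp add: qf_3 algebra_simps power2_eq_square)
    have f1: "?a22*?b1^2 = ?b2*(?a12*?b1 - ?a11*?b2)" using e1 by Groebner_Basis.algebra
    have f2: "?a33*?b1^2 = ?b3*(?a13*?b1 - ?a11*?b3)" using e2 by Groebner_Basis.algebra
    have f3: "?a23*?b1^2 = ?b1*(?a12*?b3 + ?a13*?b2) - 2*?a11*?b2*?b3" using e1 e2 e3 by Groebner_Basis.algebra
    have "4 * ?a11 * ?a22 * ?a33 + ?a12 * ?a13 * ?a23 - ?a11 * ?a23^2 - ?a22 * ?a13^2 - ?a33 * ?a12^2 = 0"
      by (rule line_disc1[OF f1 f2 f3 b1])
    then show "disc A = 0" unfolding disc_3 by (simp add: algebra_simps)
  qed
  show ?thesis unfolding basis_prop_def using d1 S ind sp dc by blast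
qed

lemma basis_exists:
  fixes be :: "'a::field^3" and S :: "'a set"
  assumes b0: "be \<noteq> 0" and bS: "\<forall>i. be$i \<in> S"
    and S0: "0 \<in> S" and Sneg: "\<forall>x\<in>S. -x \<in> S" and Sdiv: "\<forall>x\<in>S. \<forall>y\<in>S. x / y \<in> S"
  shows "\<exists>u1 u2. basis_prop S be u1 u2"
proof -
  have "be$1 \<noteq> 0 \<or> be$2 \<noteq> 0 \<or> be$3 \<noteq> 0" using b0 by (auto simp: vec_eq_iff forall_3)
  then show ?thesis using basis1[OF _ bS S0 Sneg Sdiv] basis2[OF _ bS S0 Sneg Sdiv] basis3[OF _ bS S0 Sneg Sdiv] by blast
qed

lemma three_zero:
  fixes a m c x1 t1 x2 t2 x3 t3 :: "'a::field"
  assumes "a * x1^2 + m * x1*t1 + c*t1^2 = 0" "a * x2^2 + m * x2*t2 + c*t2^2 = 0" "a * x3^2 + m * x3*t3 + c*t3^2 = 0"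
   "x1*t2 - x2*t1 \<noteq> 0" "x1*t3 - x3*t1 \<noteq> 0" "x2*t3 - x3*t2 \<noteq> 0"
  shows "a = 0 \<and> m = 0 \<and> c = 0"
proof -
  have "(x1*t2 - x2*t1)*(x1*t3 - x3*t1)*(x2*t3 - x3*t2) * a = 0" using assms(1-3) by Groebner_Basis.algebra
  then have a: "a = 0" using assms(4-6) by simp
  have "(x1*t2 - x2*t1)*(x1*t3 - x3*t1)*(x2*t3 - x3*t2) * c = 0" using assms(1-3) by Groebner_Basis.algebra
  then have c: "c = 0" using assms(4-6) by simp
  have "(x1*t2 - x2*t1)*(x1*t3 - x3*t1)*(x2*t3 - x3*t2) * m = 0" using assms(1-3) by Groebner_Basis.algebra
  then have "m = 0" using assms(4-6) by simp
  with a c show ?thesis by simp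
qed


lemma comb_mat: "comb b w = transpose b *v w"
  by (simp add: comb_def matrix_vector_mult_def transpose_def vec_eq_iff sum_component mult.commute)

lemma comb_add: "comb b (x + y) = comb b x + comb b y"
  by (simp add: comb_mat matrix_vector_right_distrib)

lemma comb_smult: "comb b (c *s x) = c *s comb b x"
  by (simp add: comb_def vec_eq_iff sum_component sum_distrib_left algebra_simps)

lemma comb_3: "(comb b w) $ 3 = dotv (\<chi> i. b$i$3) w"
  by (simp add: comb_def dotv_def sum_component)

lemma img_scale_eq:
  assumes "1 \<in> S" "x \<noteq> 0" "(\<lambda>c. c *s x) ` S = (\<lambda>c. c *s (y::'a::field^'n)) ` S"
  shows "\<exists>c\<in>S. c \<noteq> 0 \<and> x = c *s y"
proof -
  have "x \<in> (\<lambda>c. c *s x) ` S" using assms(1) by force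
  then obtain c where "c \<in> S" "x = c *s y" using assms(3) by auto
  moreover have "c \<noteq> 0" using \<open>x = c *s y\<close> assms(2) by auto
  ultimately show ?thesis by blast
qed

lemma img_scale:
  assumes "c \<in> S" "c \<noteq> 0" "\<forall>x\<in>S. \<forall>y\<in>S. x * y \<in> S" "\<forall>x\<in>S. inverse x \<in> S"
  shows "(\<lambda>d. d *s (c *s (x::'a::field^'n))) ` S = (\<lambda>d. d *s x) ` S"
proof
  show "(\<lambda>d. d *s (c *s x)) ` S \<subseteq> (\<lambda>d. d *s x) ` S"
    using assms by (auto simp: vector_smult_assoc)
  show "(\<lambda>d. d *s x) ` S \<subseteq> (\<lambda>d. d *s (c *s x)) ` S"
  proof
    fix v assume "v \<in> (\<lambda>d. d *s x) ` S"
    then obtain d where d: "d \<in> S" "v = d *s x" by auto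
    have "v = (d * inverse c) *s (c *s x)" using d assms(2) by (simp add: vector_smult_assoc)
    moreover have "d * inverse c \<in> S" using assms d by blast
    ultimately show "v \<in> (\<lambda>d. d *s (c *s x)) ` S" by blast
  qed
qed

lemma P2_eq: "x \<noteq> 0 \<Longrightarrow> P2 x = P2 y \<Longrightarrow> \<exists>c. c \<noteq> 0 \<and> x = c *s y"
  using img_scale_eq[of UNIV x y] unfolding P2_def by auto

lemma P2_scale: "c \<noteq> 0 \<Longrightarrow> P2 (c *s x) = P2 x"
  using img_scale[of c UNIV x] unfolding P2_def by auto

lemma P5_eq: "x \<noteq> 0 \<Longrightarrow> P5 x = P5 y \<Longrightarrow> \<exists>c. c \<noteq> 0 \<and> x = c *s y"
  using img_scale_eq[of UNIV x y] unfolding P5_def by auto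

lemma P5_scale: "c \<noteq> 0 \<Longrightarrow> P5 (c *s x) = P5 x"
  using img_scale[of c UNIV x] unfolding P5_def by auto

lemma mem_P2: "x \<in> P2 y \<longleftrightarrow> (\<exists>c. x = c *s y)" by (auto simp: P2_def)
lemma mem_P5: "x \<in> P5 y \<longleftrightarrow> (\<exists>c. x = c *s y)" by (auto simp: P5_def)

lemma linf_iff: "x \<noteq> 0 \<Longrightarrow> P2 x \<in> linf \<longleftrightarrow> x $ 3 = 0"
proof
  assume "x \<noteq> 0" "P2 x \<in> linf"
  then obtain v where "v \<noteq> 0" "v$3 = 0" "P2 x = P2 v" by (auto simp: linf_def)
  moreover obtain c where "x = c *s v" using P2_eq[OF \<open>x \<noteq> 0\<close> \<open>P2 x = P2 v\<close>] by auto
  ultimately show "x$3 = 0" by simp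
qed (auto simp: linf_def)

context setting
begin

lemma P4_eq: assumes "(x::'a^3) \<noteq> 0" "P4 q x = P4 q y" shows "\<exists>c\<in>Fq q. c \<noteq> 0 \<and> x = c *s y"
  using img_scale_eq[OF Fq_1 assms(1) assms(2)[unfolded P4_def]] .

lemma P4_scale: assumes "(c::'a) \<in> Fq q" "c \<noteq> 0" shows "P4 q (c *s (x::'a^3)) = P4 q x"
  unfolding P4_def by (rule img_scale[OF assms]) auto

lemma sigma_iff: "(x::'a^3) \<noteq> 0 \<Longrightarrow> P4 q x \<in> sigma_inf q \<longleftrightarrow> x $ 3 = 0"
proof
  assume "x \<noteq> 0" "P4 q x \<in> sigma_inf q"
  then obtain v where "v \<noteq> 0" "v$3 = 0" "P4 q x = P4 q v" by (auto simp: sigma_inf_def)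
  moreover obtain c where "x = c *s v" using P4_eq[OF \<open>x \<noteq> 0\<close> \<open>P4 q x = P4 q v\<close>] by auto
  ultimately show "x$3 = 0" by simp
qed (auto simp: sigma_inf_def)

lemma plane4: "is_plane4 q b" using N by (simp add: nondeg_conic4_def)

lemma comb_Fq_zero: "\<forall>i. w$i \<in> Fq q \<Longrightarrow> comb b w = 0 \<Longrightarrow> w = 0"
  using plane4 by (simp add: is_plane4_def)

definition be :: "'a^3" where "be = (\<chi> i. b$i$3)"

lemma be_Fq: "\<forall>i. be$i \<in> Fq q"
  using plane4 by (simp add: is_plane4_def be_def Vq_def)

lemma comb3: "(comb b w)$3 = dotv be w" by (simp add: comb_3 be_def)

lemma be_nz: "be \<noteq> 0"
proof
  assume "be = 0"
  obtain p where "p \<in> plane_pts q b" "p \<notin> sigma_inf q" using not_inf by blast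
  then obtain w where w: "w \<noteq> 0" "\<forall>i. w$i \<in> Fq q" "p = P4 q (comb b w)" by (auto simp: plane_pts_def)
  have "comb b w \<noteq> 0" using comb_Fq_zero w by blast
  moreover have "(comb b w)$3 = 0" using \<open>be = 0\<close> by (simp add: comb3 dotv_def)
  ultimately show False using sigma_iff \<open>p \<notin> sigma_inf q\<close> w(3) by blast
qed

lemma Fq_clos: "(0::'a) \<in> Fq q" "\<forall>x\<in>Fq q. -(x::'a) \<in> Fq q" "\<forall>x\<in>Fq q. \<forall>y\<in>Fq q. (x::'a) / y \<in> Fq q"
  "\<forall>x\<in>Fq q. \<forall>y\<in>Fq q. (x::'a) * y \<in> Fq q" "\<forall>x\<in>Fq q. inverse (x::'a) \<in> Fq q"
  by auto

definition u1 :: "'a^3" where "u1 = (SOME u. \<exists>v. basis_prop (Fq q) be u v)"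
definition u2 :: "'a^3" where "u2 = (SOME v. basis_prop (Fq q) be u1 v)"

lemma bprop: "basis_prop (Fq q) be u1 u2"
proof -
  have "\<exists>u v. basis_prop (Fq q) be u v"
    using basis_exists[OF be_nz be_Fq Fq_clos(1-3)] .
  then have "\<exists>v. basis_prop (Fq q) be u1 v" unfolding u1_def by (rule someI_ex)
  then show ?thesis unfolding u2_def by (rule someI_ex)
qed

definition d1 :: "'a^3" where "d1 = comb b u1"
definition d2 :: "'a^3" where "d2 = comb b u2"

lemma u_Fq: "\<forall>i. u1$i \<in> Fq q" "\<forall>i. u2$i \<in> Fq q" using bprop by (auto simp: basis_prop_def)
lemma u_ind: "x *s u1 + y *s u2 = 0 \<Longrightarrow> x = 0 \<and> y = 0" using bprop by (auto simp: basis_prop_def)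
lemma u_span: "dotv be w = 0 \<Longrightarrow> \<exists>x y. w = x *s u1 + y *s u2 \<and> ((\<forall>i. w$i \<in> Fq q) \<longrightarrow> x \<in> Fq q \<and> y \<in> Fq q)"
  using bprop by (auto simp: basis_prop_def)
lemma u_disc: "qf C u1 = 0 \<Longrightarrow> qf C u2 = 0 \<Longrightarrow> qf C (u1+u2) = 0 \<Longrightarrow> disc C = 0"
  using bprop by (auto simp: basis_prop_def)

lemma d_lin: "comb b (x *s u1 + y *s u2) = x *s d1 + y *s d2"
  by (simp add: comb_add comb_smult d1_def d2_def)

lemma d3: "d1$3 = 0" "d2$3 = 0" using bprop by (simp_all add: d1_def d2_def comb3 basis_prop_def)

lemma uc_Fq: "x \<in> Fq q \<Longrightarrow> y \<in> Fq q \<Longrightarrow> \<forall>i. (x *s u1 + y *s u2)$i \<in> Fq q"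
  using u_Fq by auto

lemma uc_nz: "x \<noteq> 0 \<or> y \<noteq> 0 \<Longrightarrow> x *s u1 + y *s u2 \<noteq> 0"
  using u_ind by blast

lemma d_nz: "d1 \<noteq> 0" "d2 \<noteq> 0"
proof -
  have "comb b (1 *s u1 + 0 *s u2) \<noteq> 0"
    using comb_Fq_zero[OF uc_Fq[of 1 0]] uc_nz[of 1 0] by auto
  then show "d1 \<noteq> 0" by (simp add: d1_def)
  have "comb b (0 *s u1 + 1 *s u2) \<noteq> 0"
    using comb_Fq_zero[OF uc_Fq[of 0 1]] uc_nz[of 0 1] by auto
  then show "d2 \<noteq> 0" by (simp add: d2_def)
qed

lemma d1_linf: "P2 d1 \<in> linf" using linf_iff d_nz d3 by blast

lemma exists_nonFq: "\<exists>mu::'a. mu \<notin> Fq q"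
proof (rule ccontr)
  assume all: "\<not> (\<exists>mu::'a. mu \<notin> Fq q)"
  have "spread q (P2 d1) \<subseteq> plane_pts q b"
  proof
    fix p assume "p \<in> spread q (P2 d1)"
    then obtain u where u: "u \<noteq> 0" "P2 u = P2 d1" "p = P4 q u" by (auto simp: spread_def)
    then obtain l where l: "l \<noteq> 0" "u = l *s d1" using P2_eq by blast
    have "u = comb b (l *s u1 + 0 *s u2)" using l by (simp add: d1_def comb_smult)
    moreover have "l *s u1 + 0 *s u2 \<noteq> 0" using uc_nz l by blast
    moreover have "\<forall>i. (l *s u1 + 0 *s u2)$i \<in> Fq q" using all uc_Fq by blast
    ultimately show "p \<in> plane_pts q b" unfolding plane_pts_def using u(3) by blast
  qed
  then show False using no_spread d1_linf by blast
qed

lemma card_Fq: "card (Fq q :: 'a set) = q"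
proof -
  obtain mu :: 'a where mu: "mu \<notin> Fq q" using exists_nonFq by blast
  let ?f = "\<lambda>(s,t). s + t * mu"
  have inj: "inj_on ?f (Fq q \<times> Fq q)"
  proof (rule inj_onI, clarsimp)
    fix s t s' t' :: 'a
    assume h: "s \<in> Fq q" "t \<in> Fq q" "s' \<in> Fq q" "t' \<in> Fq q" "s + t * mu = s' + t' * mu"
    show "s = s' \<and> t = t'"
    proof (cases "t = t'")
      case True then show ?thesis using h by simp
    next
      case False
      then have "mu = (s' - s) / (t - t')" using h(5) by (simp add: field_simps)
      then have "mu \<in> Fq q" using h by auto
      then show ?thesis using mu by blast
    qed
  qed
  have surj: "?f ` (Fq q \<times> Fq q) = UNIV"
  proof -
    { fix l :: 'a
      obtain s t where "s \<in> Fq q" "t \<in> Fq q" "l = s + t * mu" using decomp[OF mu] by blast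
      then have "l \<in> ?f ` (Fq q \<times> Fq q)" by force }
    then show ?thesis by blast
  qed
  have "card (Fq q \<times> Fq q :: ('a \<times> 'a) set) = CARD('a)"
    using card_image[OF inj] surj by simp
  then have "card (Fq q :: 'a set) ^ 2 = q ^ 2" using card by (simp add: card_cartesian_product power2_eq_square)
  then show ?thesis by (simp add: power2_eq_iff_nonneg)
qed

end

context setting begin

lemma d_indep: assumes h: "x *s d1 + y *s d2 = 0" shows "x = 0 \<and> y = 0"
proof (rule ccontr)
  assume nz: "\<not> (x = 0 \<and> y = 0)"
  have y: "y \<noteq> 0"
  proof
    assume "y = 0"
    then have "x \<noteq> 0" "x *s d1 = 0" using nz h by auto
    then show False using d_nz by (simp add: vec_eq_iff)
  qed
  define mu where "mu = - x / y"
  have d2eq: "d2 = mu *s d1"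
  proof -
    { fix i have "x * d1$i + y * d2$i = 0" using h by (simp add: vec_eq_iff)
      then have "y * d2$i = - (x * d1$i)" by (simp add: eq_neg_iff_add_eq_0 add.commute)
      then have "d2$i = mu * d1$i" using y unfolding mu_def by (simp add: field_simps) }
    then show ?thesis by (simp add: vec_eq_iff)
  qed
  show False
  proof (cases "mu \<in> Fq q")
    case True
    have "(- mu) *s d1 + 1 *s d2 = (- mu) *s d1 + mu *s d1" by (simp only: d2eq vector_smult_lid)
    also have "\<dots> = 0" by (simp add: vec_eq_iff)
    finally have "(- mu) *s d1 + 1 *s d2 = 0" .
    then have "comb b ((- mu) *s u1 + 1 *s u2) = 0" unfolding d_lin .
    moreover have "\<forall>i. ((- mu) *s u1 + 1 *s u2)$i \<in> Fq q" using uc_Fq[OF Fq_neg[OF True] Fq_1] .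
    moreover have "(- mu) *s u1 + 1 *s u2 \<noteq> 0" by (rule uc_nz) simp
    ultimately show False using comb_Fq_zero by blast
  next
    case False
    have "spread q (P2 d1) \<subseteq> plane_pts q b"
    proof
      fix p assume "p \<in> spread q (P2 d1)"
      then obtain u where u: "u \<noteq> 0" "P2 u = P2 d1" "p = P4 q u" by (auto simp: spread_def)
      then obtain l where l: "l \<noteq> 0" "u = l *s d1" using P2_eq by blast
      obtain s t where st: "s \<in> Fq q" "t \<in> Fq q" "l = s + t * mu" using decomp[OF False] by blast
      have "comb b (s *s u1 + t *s u2) = s *s d1 + t *s (mu *s d1)" by (simp only: d_lin d2eq)
      also have "\<dots> = l *s d1" using st(3) by (simp add: vec_eq_iff algebra_simps)
      finally have ueq: "u = comb b (s *s u1 + t *s u2)" using l by simp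
      have "s *s u1 + t *s u2 \<noteq> 0"
      proof
        assume "s *s u1 + t *s u2 = 0"
        then have "u = comb b 0" using ueq by simp
        then show False using u(1) by (simp add: comb_mat)
      qed
      note ueq this
      moreover have "\<forall>i. (s *s u1 + t *s u2)$i \<in> Fq q" using uc_Fq[OF st(1) st(2)] .
      ultimately show "p \<in> plane_pts q b" unfolding plane_pts_def using u(3) by blast
    qed
    then show False using no_spread d1_linf by blast
  qed
qed

lemma comb_inj0: assumes "comb b k = 0" shows "k = 0"
proof -
  have "dotv be k = 0" using assms comb3[of k] by simp
  then obtain x y where k: "k = x *s u1 + y *s u2" using u_span by blast
  then have "x *s d1 + y *s d2 = 0" using assms d_lin by simp
  then have "x = 0 \<and> y = 0" by (rule d_indep)
  then show ?thesis using k by simp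
qed

lemma comb_inj: "comb b k = comb b k' \<Longrightarrow> k = k'"
  using comb_inj0[of "k - k'"] by (simp add: comb_mat matrix_vector_mult_diff_distrib)

lemma det_nz: "det (transpose b) \<noteq> 0"
proof -
  have "\<forall>x. transpose b *v x = 0 \<longrightarrow> x = 0" using comb_inj0 by (simp add: comb_mat)
  then show ?thesis
    using matrix_left_invertible_ker invertible_left_inverse invertible_det_nz by blast
qed

lemma dotv_Fq: "\<forall>i. w$i \<in> Fq q \<Longrightarrow> dotv be w \<in> Fq q"
  using be_Fq by (auto simp: dotv_3 intro!: Fq_add Fq_mult)

lemma comb_Fq3: "\<forall>i. w$i \<in> Fq q \<Longrightarrow> (comb b w)$3 \<in> Fq q"
  using dotv_Fq comb3 by simp

lemma aff:
  assumes "P2 v = P2 (comb b w)" "v$3 = 1" "\<forall>i. w$i \<in> Fq q"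
  shows "\<exists>c\<in>Fq q. c \<noteq> 0 \<and> v = comb b (c *s w)"
proof -
  have "v \<noteq> 0" using assms(2) by auto
  then obtain c where c: "c \<noteq> 0" "v = c *s comb b w" using P2_eq assms(1) by blast
  then have "c * (comb b w)$3 = 1" using assms(2) by simp
  then have "(comb b w)$3 \<noteq> 0" by auto
  with \<open>c * (comb b w)$3 = 1\<close> have "c = 1 / (comb b w)$3" by (simp add: field_simps)
  then have "c \<in> Fq q" using comb_Fq3[OF assms(3)] by auto
  then show ?thesis using c by (auto simp: comb_smult)
qed

lemma aff2:
  assumes "\<forall>i. w$i \<in> Fq q" "(comb b w)$3 \<noteq> 0"
  shows "(comb b ((1 / (comb b w)$3) *s w))$3 = 1"
    "P4 q (comb b ((1 / (comb b w)$3) *s w)) = P4 q (comb b w)"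
    "P2 (comb b ((1 / (comb b w)$3) *s w)) = P2 (comb b w)"
    "\<forall>i. ((1 / (comb b w)$3) *s w)$i \<in> Fq q"
    "(1 / (comb b w)$3) \<noteq> 0"
proof -
  have c: "1 / (comb b w)$3 \<in> Fq q" "1 / (comb b w)$3 \<noteq> 0" using comb_Fq3[OF assms(1)] assms(2) by auto
  show "(comb b ((1 / (comb b w)$3) *s w))$3 = 1" using assms(2) by (simp add: comb_smult)
  show "P4 q (comb b ((1 / (comb b w)$3) *s w)) = P4 q (comb b w)"
    unfolding comb_smult using P4_scale[OF c] .
  show "P2 (comb b ((1 / (comb b w)$3) *s w)) = P2 (comb b w)"
    unfolding comb_smult using P2_scale[OF c(2)] .
  show "\<forall>i. ((1 / (comb b w)$3) *s w)$i \<in> Fq q"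
  proof
    fix i
    have "(1 / (comb b w)$3) * w$i \<in> Fq q" by (rule Fq_mult[OF c(1)]) (use assms(1) in blast)
    then show "((1 / (comb b w)$3) *s w)$i \<in> Fq q" by (simp only: vector_smult_component)
  qed
  show "(1 / (comb b w)$3) \<noteq> 0" using c by simp
qed

lemma baer_M: "baer q (transpose b) = {P2 (comb b v) | v. v \<noteq> 0 \<and> (\<forall>i. v$i \<in> Fq q)}"
  by (simp add: baer_def comb_mat)

lemma bbset_baer: "bbset q (baer q (transpose b)) = plane_pts q b - sigma_inf q"
proof
  show "bbset q (baer q (transpose b)) \<subseteq> plane_pts q b - sigma_inf q"
  proof
    fix p assume "p \<in> bbset q (baer q (transpose b))"
    then obtain v w where h: "p = P4 q v" "v$3 = 1" "P2 v = P2 (comb b w)" "w \<noteq> 0" "\<forall>i. w$i \<in> Fq q"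
      by (auto simp: bbset_def baer_M)
    obtain c where c: "c \<in> Fq q" "c \<noteq> 0" "v = comb b (c *s w)" using aff[OF h(3) h(2) h(5)] by blast
    have "p \<in> plane_pts q b" unfolding plane_pts_def using h c by (auto intro!: exI[of _ "c *s w"] Fq_mult)
    moreover have "p \<notin> sigma_inf q"
    proof
      assume "p \<in> sigma_inf q"
      moreover have "v \<noteq> 0" using h(2) by auto
      ultimately show False using sigma_iff[of v] h by auto
    qed
    ultimately show "p \<in> plane_pts q b - sigma_inf q" by blast
  qed
  show "plane_pts q b - sigma_inf q \<subseteq> bbset q (baer q (transpose b))"
  proof
    fix p assume "p \<in> plane_pts q b - sigma_inf q"
    then obtain w where w: "p = P4 q (comb b w)" "w \<noteq> 0" "\<forall>i. w$i \<in> Fq q" "p \<notin> sigma_inf q"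
      by (auto simp: plane_pts_def)
    have "comb b w \<noteq> 0" using comb_Fq_zero w by blast
    then have z: "(comb b w)$3 \<noteq> 0" using sigma_iff w by blast
    note a = aff2[OF w(3) z]
    let ?v = "comb b ((1 / (comb b w)$3) *s w)"
    have "P2 ?v \<in> baer q (transpose b)" unfolding baer_M using a w(2) by auto
    then show "p \<in> bbset q (baer q (transpose b))" unfolding bbset_def using a w(1) by auto
  qed
qed

end

context setting begin

definition gf :: "'a option \<Rightarrow> ('a^3) set" where
  "gf opt = (case opt of None \<Rightarrow> P2 d2 | Some t \<Rightarrow> P2 (d1 + t *s d2))"

lemma baer_linf: "baer q (transpose b) \<inter> linf = gf ` (insert None (Some ` Fq q))"
proof
  show "baer q (transpose b) \<inter> linf \<subseteq> gf ` (insert None (Some ` Fq q))"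
  proof
    fix X assume X: "X \<in> baer q (transpose b) \<inter> linf"
    then obtain v where v: "X = P2 (comb b v)" "v \<noteq> 0" "\<forall>i. v$i \<in> Fq q" by (auto simp: baer_M)
    have nz: "comb b v \<noteq> 0" using comb_inj0 v(2) by blast
    then have "(comb b v)$3 = 0" using linf_iff X v(1) by blast
    then have "dotv be v = 0" by (simp add: comb3)
    then obtain a c where ac: "v = a *s u1 + c *s u2" "a \<in> Fq q" "c \<in> Fq q" using u_span v(3) by blast
    have cv: "comb b v = a *s d1 + c *s d2" using ac(1) d_lin by simp
    show "X \<in> gf ` (insert None (Some ` Fq q))"
    proof (cases "a = 0")
      case True
      then have "c \<noteq> 0" using ac v(2) by auto
      then have "X = gf None" using v(1) cv True by (simp add: gf_def P2_scale)
      then show ?thesis by blast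
    next
      case False
      have aeq: "a *s d1 + c *s d2 = a *s (d1 + (c / a) *s d2)" using False
        by (simp add: vec_eq_iff field_simps)
      have "X = P2 (a *s (d1 + (c / a) *s d2))" by (simp only: v(1) cv aeq)
      also have "\<dots> = P2 (d1 + (c / a) *s d2)" by (rule P2_scale[OF False])
      also have "\<dots> = gf (Some (c / a))" by (simp add: gf_def)
      finally have "X = gf (Some (c / a))" .
      moreover have "c / a \<in> Fq q" using ac by auto
      ultimately show ?thesis by blast
    qed
  qed
  show "gf ` (insert None (Some ` Fq q)) \<subseteq> baer q (transpose b) \<inter> linf"
  proof
    fix X assume "X \<in> gf ` (insert None (Some ` Fq q))"
    then consider "X = gf None" | t where "t \<in> Fq q" "X = gf (Some t)" by blast
    then show "X \<in> baer q (transpose b) \<inter> linf"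
    proof cases
      case 1
      have "X = P2 (comb b (0 *s u1 + 1 *s u2))" using 1 by (simp add: gf_def d2_def)
      moreover have "0 *s u1 + 1 *s u2 \<noteq> 0" by (rule uc_nz) simp
      moreover have "\<forall>i. (0 *s u1 + 1 *s u2)$i \<in> Fq q" using uc_Fq[OF Fq_0 Fq_1] .
      ultimately have "X \<in> baer q (transpose b)" unfolding baer_M by blast
      moreover have "X \<in> linf" using 1 linf_iff[OF d_nz(2)] d3 by (simp add: gf_def)
      ultimately show ?thesis by blast
    next
      case 2
      have e: "comb b (1 *s u1 + t *s u2) = d1 + t *s d2" using d_lin[of 1 t] by (simp only: vector_smult_lid)
      have "X = P2 (comb b (1 *s u1 + t *s u2))" unfolding e using 2 by (simp add: gf_def)
      moreover have "1 *s u1 + t *s u2 \<noteq> 0" by (rule uc_nz) simp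
      moreover have "\<forall>i. (1 *s u1 + t *s u2)$i \<in> Fq q" using uc_Fq[OF Fq_1 2(1)] .
      ultimately have "X \<in> baer q (transpose b)" unfolding baer_M by blast
      moreover have "d1 + t *s d2 \<noteq> 0" using d_indep[of 1 t] by auto
      then have "X \<in> linf" using 2 linf_iff[OF \<open>d1 + t *s d2 \<noteq> 0\<close>] d3 by (simp add: gf_def)
      ultimately show ?thesis by blast
    qed
  qed
qed

lemma gf_inj: "inj_on gf (insert None (Some ` Fq q))"
proof (rule inj_onI)
  fix o1 o2 assume "o1 \<in> insert None (Some ` Fq q)" "o2 \<in> insert None (Some ` Fq q)" and eq: "gf o1 = gf o2"
  show "o1 = o2"
  proof (cases o1; cases o2)
    fix t assume h: "o1 = None" "o2 = Some t"
    then have "P2 d2 = P2 (d1 + t *s d2)" using eq by (simp add: gf_def)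
    then obtain c where "c \<noteq> 0" "d2 = c *s (d1 + t *s d2)" using P2_eq d_nz by blast
    then have "c *s d1 + (c * t - 1) *s d2 = 0" by (simp add: vec_eq_iff algebra_simps)
    then have "c = 0" using d_indep by blast
    then show "o1 = o2" using \<open>c \<noteq> 0\<close> by simp
  next
    fix t assume h: "o1 = Some t" "o2 = None"
    then have "P2 d2 = P2 (d1 + t *s d2)" using eq by (simp add: gf_def)
    then obtain c where "c \<noteq> 0" "d2 = c *s (d1 + t *s d2)" using P2_eq d_nz by blast
    then have "c *s d1 + (c * t - 1) *s d2 = 0" by (simp add: vec_eq_iff algebra_simps)
    then have "c = 0" using d_indep by blast
    then show "o1 = o2" using \<open>c \<noteq> 0\<close> by simp
  next
    fix t t' assume h: "o1 = Some t" "o2 = Some t'"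
    have nz: "d1 + t *s d2 \<noteq> 0" using d_indep[of 1 t] by auto
    have "P2 (d1 + t *s d2) = P2 (d1 + t' *s d2)" using eq h by (simp add: gf_def)
    then obtain c where "c \<noteq> 0" "d1 + t *s d2 = c *s (d1 + t' *s d2)" using P2_eq nz by blast
    then have "(1 - c) *s d1 + (t - c * t') *s d2 = 0" by (simp add: vec_eq_iff algebra_simps)
    then have "1 - c = 0 \<and> t - c * t' = 0" using d_indep by blast
    then show "o1 = o2" using h by simp
  qed simp
qed

lemma card_baer_linf: "card (baer q (transpose b) \<inter> linf) = q + 1"
proof -
  have "card (baer q (transpose b) \<inter> linf) = card (insert None (Some ` (Fq q :: 'a set)))"
    unfolding baer_linf by (rule card_image[OF gf_inj])
  also have "\<dots> = Suc (card (Fq q :: 'a set))"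
    by (simp add: card_image)
  finally show ?thesis using card_Fq by simp
qed

lemma baer_secant_M: "baer_secant q (baer q (transpose b))"
  using card_baer_linf det_nz unfolding baer_secant_def is_baer_def by blast

lemma baer_conic_M: "baer_conic q (transpose b) A = {P2 (comb b v) | v. v \<noteq> 0 \<and> (\<forall>i. v$i \<in> Fq q) \<and> qf A v = 0}"
  by (simp add: baer_conic_def comb_mat)

lemma spread_conic: "\<forall>T\<in>linf. (\<exists>p \<in> conic4 q b A. p \<in> spread q T) \<longrightarrow> T \<in> baer_conic q (transpose b) A"
proof (intro ballI impI)
  fix T assume "T \<in> linf" "\<exists>p \<in> conic4 q b A. p \<in> spread q T"
  then obtain p w u where h: "p = P4 q (comb b w)" "w \<noteq> 0" "\<forall>i. w$i \<in> Fq q" "qf A w = 0"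
      "p = P4 q u" "u \<noteq> 0" "P2 u = T"
    by (auto simp: conic4_def spread_def)
  then obtain c where c: "c \<in> Fq q" "c \<noteq> 0" "u = c *s comb b w" using P4_eq by metis
  then have "T = P2 (c *s comb b w)" using h(7) by simp
  also have "\<dots> = P2 (comb b w)" by (rule P2_scale[OF c(2)])
  finally have "T = P2 (comb b w)" .
  then show "T \<in> baer_conic q (transpose b) A" unfolding baer_conic_M using h by blast
qed

lemma conic_eq: "bbset q (baer_conic q (transpose b) A) \<union>
       {p \<in> plane_pts q b. \<exists>T \<in> baer_conic q (transpose b) A \<inter> linf. p \<in> spread q T}
       = conic4 q b A"
proof (intro equalityI subsetI)
  fix p assume "p \<in> bbset q (baer_conic q (transpose b) A) \<union>
       {p \<in> plane_pts q b. \<exists>T \<in> baer_conic q (transpose b) A \<inter> linf. p \<in> spread q T}"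
  then consider "p \<in> bbset q (baer_conic q (transpose b) A)"
    | "p \<in> plane_pts q b" "\<exists>T \<in> baer_conic q (transpose b) A \<inter> linf. p \<in> spread q T" by blast
  then show "p \<in> conic4 q b A"
  proof cases
    case 1
    then obtain v w where h: "p = P4 q v" "v$3 = 1" "P2 v = P2 (comb b w)" "w \<noteq> 0" "\<forall>i. w$i \<in> Fq q" "qf A w = 0"
      by (auto simp: bbset_def baer_conic_M)
    obtain c where c: "c \<in> Fq q" "c \<noteq> 0" "v = comb b (c *s w)" using aff[OF h(3) h(2) h(5)] by blast
    have "c *s w \<noteq> 0" using c h by (simp add: vec_eq_iff)
    moreover have "\<forall>i. (c *s w)$i \<in> Fq q" using c h by auto
    moreover have "qf A (c *s w) = 0" using h by (simp add: qf_scale)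
    ultimately show ?thesis unfolding conic4_def using h(1) c(3) by blast
  next
    case 2
    then obtain w' where w': "p = P4 q (comb b w')" "w' \<noteq> 0" "\<forall>i. w'$i \<in> Fq q" by (auto simp: plane_pts_def)
    obtain T where "T \<in> baer_conic q (transpose b) A" "p \<in> spread q T" using 2 by blast
    then obtain w u where h: "T = P2 (comb b w)" "w \<noteq> 0" "qf A w = 0" "p = P4 q u" "u \<noteq> 0" "P2 u = T"
      by (auto simp: baer_conic_M spread_def)
    obtain l where l: "l \<noteq> 0" "u = l *s comb b w" using P2_eq h by metis
    obtain c where c: "c \<in> Fq q" "c \<noteq> 0" "u = c *s comb b w'" using P4_eq h w' by metis
    have "comb b (c *s w') = comb b (l *s w)" using l c by (simp add: comb_smult)
    then have "c *s w' = l *s w" by (rule comb_inj)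
    then have "w' = (l / c) *s w" using c(2) by (simp add: vec_eq_iff field_simps)
    then have "qf A w' = 0" using h by (simp add: qf_scale)
    then show ?thesis unfolding conic4_def using w' by blast
  qed
next
  fix p assume "p \<in> conic4 q b A"
  then obtain w where w: "p = P4 q (comb b w)" "w \<noteq> 0" "\<forall>i. w$i \<in> Fq q" "qf A w = 0"
    by (auto simp: conic4_def)
  have cnz: "comb b w \<noteq> 0" using comb_Fq_zero w by blast
  show "p \<in> bbset q (baer_conic q (transpose b) A) \<union>
       {p \<in> plane_pts q b. \<exists>T \<in> baer_conic q (transpose b) A \<inter> linf. p \<in> spread q T}"
  proof (cases "(comb b w)$3 = 0")
    case False
    note a = aff2[OF w(3) False]
    let ?c = "1 / (comb b w)$3"
    have "?c *s w \<noteq> 0" using a(5) w(2) by (simp add: vec_eq_iff)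
    moreover have "qf A (?c *s w) = 0" using w by (simp add: qf_scale)
    ultimately have "P2 (comb b (?c *s w)) \<in> baer_conic q (transpose b) A"
      unfolding baer_conic_M using a(4) by blast
    then have "p \<in> bbset q (baer_conic q (transpose b) A)" unfolding bbset_def using a(1,2) w(1) by auto
    then show ?thesis by blast
  next
    case True
    have "p \<in> plane_pts q b" unfolding plane_pts_def using w by blast
    moreover have "P2 (comb b w) \<in> baer_conic q (transpose b) A" unfolding baer_conic_M using w by blast
    moreover have "P2 (comb b w) \<in> linf" using linf_iff cnz True by blast
    moreover have "p \<in> spread q (P2 (comb b w))" unfolding spread_def using w(1) cnz by blast
    ultimately show ?thesis by blast
  qed
qed

end


lemma exhaust_5:
  fixes x :: 5
  shows "x = 1 \<or> x = 2 \<or> x = 3 \<or> x = 4 \<or> x = 5"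
proof (induct x)
  case (of_int z)
  then have "z = 0 \<or> z = 1 \<or> z = 2 \<or> z = 3 \<or> z = 4" by fastforce
  then show ?case by auto
qed

lemma forall_5: "(\<forall>i::5. P i) \<longleftrightarrow> P 1 \<and> P 2 \<and> P 3 \<and> P 4 \<and> P 5"
  by (metis exhaust_5)

lemma vector_5 [simp]:
 "(vector [x1,x2,x3,x4,x5] ::('a::zero)^5)$1 = x1"
 "(vector [x1,x2,x3,x4,x5] ::('a::zero)^5)$2 = x2"
 "(vector [x1,x2,x3,x4,x5] ::('a::zero)^5)$3 = x3"
 "(vector [x1,x2,x3,x4,x5] ::('a::zero)^5)$4 = x4"
 "(vector [x1,x2,x3,x4,x5] ::('a::zero)^5)$5 = x5"
  unfolding vector_def by simp_all

lemma dep2: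
  fixes x1 y1 x2 y2 :: "'a::field"
  assumes "x1 * y2 - x2 * y1 = 0" "x2 \<noteq> 0 \<or> y2 \<noteq> 0"
  shows "\<exists>l. x1 = l * x2 \<and> y1 = l * y2"
proof (cases "x2 = 0")
  case True
  then have "y2 \<noteq> 0" using assms by simp
  then show ?thesis using assms True by (intro exI[of _ "y1 / y2"]) (auto simp: field_simps)
next
  case False
  then show ?thesis using assms by (intro exI[of _ "x1 / x2"]) (auto simp: field_simps)
qed

context setting begin

definition E :: "'a^3 \<Rightarrow> 'a^5" where "E w = (\<Sum>i\<in>UNIV. (w $ i) *s emb q (b $ i))"

lemma E_comp: "(E w)$1 = (comb b w)$1" "(E w)$2 = (comb b w)$2" "(E w)$5 = (comb b w)$3"
  by (simp_all add: E_def comb_def sum_component emb_def)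

lemma conic4_ext_E: "conic4_ext q b A = {P5 (E w) | w. w \<noteq> 0 \<and> qf A w = 0}"
  by (simp add: conic4_ext_def E_def)

lemma gpts_E:
  assumes "X \<in> gpts" shows "\<exists>pv. X = P5 pv \<and> pv \<noteq> 0 \<and> pv$3 = 0 \<and> pv$4 = 0 \<and> pv$5 = 0"
  using assms by (auto simp: gpts_def)


lemma spread_mem:
  assumes "P4 q u \<in> spread q (P2 t)" "(t::'a^3) \<noteq> 0"
  shows "\<exists>l. u = l *s t"
proof -
  obtain u' where u': "u' \<noteq> 0" "P2 u' = P2 t" "P4 q u = P4 q u'" using assms(1) by (auto simp: spread_def)
  obtain m where m: "u' = m *s t" using P2_eq[OF u'(1) u'(2)] by blast
  have "u' \<in> P4 q u'" unfolding P4_def by (rule image_eqI[of _ _ 1]) simp_all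
  then have "u' \<in> P4 q u" using u' by simp
  then obtain c where c: "c \<in> Fq q" "u' = c *s u" by (auto simp: P4_def)
  then have "c \<noteq> 0" using u' by auto
  then have "u = (m / c) *s t" using c m by (simp add: vec_eq_iff field_simps)
  then show ?thesis by blast
qed

lemma ext_g:
  assumes t: "(t::'a^3) \<noteq> 0" "t$3 = 0"
  shows "ext_spread q (P2 t) \<inter> gpts = {P5 (vector [t$1, t$2, 0, 0, 0])}"
proof -
  let ?g = "vector [t$1, t$2, 0, 0, 0] :: 'a^5"
  have t12: "t$1 \<noteq> 0 \<or> t$2 \<noteq> 0" using t by (auto simp: vec_eq_iff forall_3)
  have gnz: "?g \<noteq> 0"
  proof
    assume "?g = 0"
    then have "?g$1 = 0" "?g$2 = 0" by simp_all
    then show False using t12 by simp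
  qed
  show ?thesis
  proof (intro equalityI subsetI)
    fix X assume X: "X \<in> ext_spread q (P2 t) \<inter> gpts"
    then obtain u v where uv: "P4 q u \<in> spread q (P2 t)" "P4 q v \<in> spread q (P2 t)"
      "X \<in> join5 (P5 (emb q u)) (P5 (emb q v))" by (auto simp: ext_spread_def)
    obtain l where l: "u = l *s t" using spread_mem[OF uv(1) t(1)] by blast
    obtain l' where l': "v = l' *s t" using spread_mem[OF uv(2) t(1)] by blast
    obtain x al be where x: "X = P5 x" "x \<noteq> 0" "x = al *s emb q u + be *s emb q v"
      using uv(3) by (auto simp: join5_def P5_def)
    obtain y where y: "X = P5 y" "y$3 = 0" "y$4 = 0" using X by (auto simp: gpts_def)
    obtain k where "x = k *s y" using P5_eq[OF x(2)] x(1) y(1) by metis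
    then have x34: "x$3 = 0" "x$4 = 0" using y by simp_all
    let ?k = "al * l + be * l'"
    have xk: "x = ?k *s ?g"
      using x34 unfolding vec_eq_iff forall_5 using x(3) l l' t(2)
      by (simp add: emb_def algebra_simps)
    have kne: "?k \<noteq> 0"
    proof
      assume "?k = 0"
      then have "x = 0" using xk by (metis vector_smult_lzero)
      then show False using x(2) by simp
    qed
    have "X = P5 (?k *s ?g)" using x(1) xk by (simp only:)
    also have "\<dots> = P5 ?g" by (rule P5_scale[OF kne])
    finally have "X = P5 ?g" .
    then show "X \<in> {P5 ?g}" by simp
  next
    fix X assume "X \<in> {P5 ?g}"
    then have X: "X = P5 ?g" by simp
    obtain mu :: 'a where mu: "mu \<notin> Fq q" using exists_nonFq by blast
    then have mu0: "mu \<noteq> 0" by auto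
    have kap: "mu ^ q - mu \<noteq> 0" using mu by (simp add: Fq_iff)
    have s1: "P4 q t \<in> spread q (P2 t)" using t(1) by (auto simp: spread_def)
    have mt: "mu *s t \<noteq> 0"
    proof
      assume "mu *s t = 0"
      then have "t = (1/mu) *s (mu *s t)" using mu0 by (simp add: vector_smult_assoc)
      then show False using t(1) \<open>mu *s t = 0\<close> by simp
    qed
    have s2: "P4 q (mu *s t) \<in> spread q (P2 t)" unfolding spread_def
      using mt P2_scale[OF mu0, of t] by blast
    have ne: "P4 q t \<noteq> P4 q (mu *s t)"
    proof
      assume "P4 q t = P4 q (mu *s t)"
      then obtain c where c: "c \<in> Fq q" "t = c *s (mu *s t)" using P4_eq[OF t(1)] by blast
      have "c * mu = 1"
      proof (cases "t$1 = 0")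
        case True
        then have "t$2 \<noteq> 0" using t12 by simp
        moreover have "t$2 = c * mu * t$2" using arg_cong[OF c(2), of "\<lambda>v. v$2"] by (simp add: mult.assoc)
        ultimately show ?thesis by simp
      next
        case False
        moreover have "t$1 = c * mu * t$1" using arg_cong[OF c(2), of "\<lambda>v. v$1"] by (simp add: mult.assoc)
        ultimately show ?thesis by simp
      qed
      then have "c \<noteq> 0" by auto
      then have "mu = 1 / c" using \<open>c * mu = 1\<close> by (simp add: eq_divide_eq mult.commute)
      then have "mu \<in> Fq q" using c(1) by auto
      then show False using mu by blast
    qed
    let ?x = "(mu ^ q) *s emb q t + (-1) *s emb q (mu *s t)"
    have xg: "?x = (mu ^ q - mu) *s ?g" using t(2)
      by (simp add: vec_eq_iff forall_5 emb_def algebra_simps power_mult_distrib)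
    have xnz: "?x \<noteq> 0" unfolding xg using kap gnz by simp
    have "X = P5 ?x" unfolding xg X using P5_scale[OF kap] by simp
    moreover have u_in: "(mu ^ q) *s emb q t \<in> P5 (emb q t)" unfolding P5_def by (rule rangeI)
    moreover have v_in: "(-1) *s emb q (mu *s t) \<in> P5 (emb q (mu *s t))" unfolding P5_def by (rule rangeI)
    ultimately have "X \<in> join5 (P5 (emb q t)) (P5 (emb q (mu *s t)))"
      unfolding join5_def using xnz by blast
    then have "X \<in> ext_spread q (P2 t)" unfolding ext_spread_def using s1 s2 ne by blast
    moreover have "X \<in> gpts" unfolding gpts_def X using gnz by auto
    ultimately show "X \<in> ext_spread q (P2 t) \<inter> gpts" by blast
  qed
qed

lemma corr_iff:
  assumes pv: "(pv::'a^5) \<noteq> 0" "pv$3 = 0" "pv$4 = 0" "pv$5 = 0"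
  shows "corr q Tb (P5 pv) \<longleftrightarrow> Tb = P2 (vector [pv$1, pv$2, 0])"
proof -
  let ?pb = "vector [pv$1, pv$2, 0] :: 'a^3"
  have pbnz: "?pb \<noteq> 0" using pv by (auto simp: vec_eq_iff forall_3 forall_5)
  have gp: "vector [?pb$1, ?pb$2, 0, 0, 0] = pv" using pv by (simp add: vec_eq_iff forall_5)
  show ?thesis
  proof
    assume c: "corr q Tb (P5 pv)"
    then obtain t where t: "Tb = P2 t" "t \<noteq> 0" "t$3 = 0" by (auto simp: corr_def linf_def)
    have "{P5 (vector [t$1, t$2, 0, 0, 0])} = {P5 pv}" using c ext_g[OF t(2,3)] t(1) by (simp add: corr_def)
    then have "P5 (vector [t$1, t$2, 0, 0, 0]) = P5 pv" by simp
    moreover have "vector [t$1, t$2, 0, 0, 0] \<noteq> (0::'a^5)"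
    proof
      assume "vector [t$1, t$2, 0, 0, 0] = (0::'a^5)"
      then have "(vector [t$1, t$2, 0, 0, 0]::'a^5)$1 = 0" "(vector [t$1, t$2, 0, 0, 0]::'a^5)$2 = 0" by simp_all
      then show False using t by (simp add: vec_eq_iff forall_3)
    qed
    ultimately obtain k where k: "k \<noteq> 0" "vector [t$1, t$2, 0, 0, 0] = k *s pv" using P5_eq by metis
    then have "t = k *s ?pb" using t(3) pv by (simp add: vec_eq_iff forall_3 forall_5)
    then show "Tb = P2 ?pb" using t(1) P2_scale[OF k(1)] by simp
  next
    assume "Tb = P2 ?pb"
    moreover have "P2 ?pb \<in> linf" using linf_iff[OF pbnz] by simp
    moreover have "ext_spread q (P2 ?pb) \<inter> gpts = {P5 pv}" using ext_g[OF pbnz] gp by simp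
    ultimately show "corr q Tb (P5 pv)" by (simp add: corr_def)
  qed
qed

end

context setting begin

lemma join5_comm: "join5 X Y = join5 Y X"
  unfolding join5_def by (metis (no_types, lifting) add.commute)

lemma E_to_comb:
  assumes "P5 (E w) = P5 x" "x \<noteq> 0" "x$1 = k0 * a1" "x$2 = k0 * a2" "x$5 = 0" "w \<noteq> 0"
  shows "\<exists>k. k \<noteq> 0 \<and> comb b w = k *s vector [a1, a2, 0]"
proof -
  obtain c where c: "c \<noteq> 0" "x = c *s E w" using P5_eq[OF assms(2) assms(1)[symmetric]] by blast
  have "comb b w = (k0 / c) *s vector [a1, a2, 0]"
    unfolding vec_eq_iff forall_3 using c assms(3-5) E_comp[of w]
    by (simp add: field_simps)
  moreover have "k0 / c \<noteq> 0"
  proof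
    assume "k0 / c = 0"
    then have "comb b w = 0" using calculation by (metis vector_smult_lzero)
    then show False using comb_inj0 assms(6) by blast
  qed
  ultimately show ?thesis by blast
qed

lemma special_pt:
  assumes "X \<in> conic4_ext q b A" "X \<in> join5 (P5 rv) (cpt q (P5 sv))"
    "(sv::'a^5)$3 = 0" "sv$4 = 0" "sv$5 = 0" "(rv::'a^5)$5 = 0"
  shows "\<exists>w. w \<noteq> 0 \<and> qf A w = 0 \<and> (\<exists>k. k \<noteq> 0 \<and> comb b w = k *s vector [rv$1, rv$2, 0])"
proof -
  obtain w where w: "X = P5 (E w)" "w \<noteq> 0" "qf A w = 0" using assms(1) by (auto simp: conic4_ext_E)
  obtain x u v where x: "X = P5 x" "x \<noteq> 0" "x = u + v" "u \<in> P5 rv" "v \<in> cpt q (P5 sv)"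
    using assms(2) by (auto simp: join5_def)
  obtain al where al: "u = al *s rv" using x(4) by (auto simp: P5_def)
  obtain be where be: "v = conj5 q (be *s sv)" using x(5) by (auto simp: cpt_def P5_def)
  have v: "v$1 = 0" "v$2 = 0" "v$5 = 0" using be assms(3-5) frob_zero by (simp_all add: conj5_def)
  have "x$1 = al * rv$1" "x$2 = al * rv$2" "x$5 = 0" using x(3) al v assms(6) by simp_all
  then obtain k where "k \<noteq> 0" "comb b w = k *s vector [rv$1, rv$2, 0]"
    using E_to_comb[OF _ x(2) _ _ _ w(2)] w(1) x(1) by metis
  then show ?thesis using w by blast
qed


lemma coords: assumes "comb b w = k *s vector [a1, a2, 0]" shows "\<exists>x y. w = x *s u1 + y *s u2"
proof -
  have "dotv be w = 0" using assms comb3[of w] by simp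
  then show ?thesis using u_span by blast
qed

lemma pt_eq:
  assumes "w = l *s w'" "comb b w' = k *s pb" "w \<noteq> 0"
  shows "P2 (comb b w) = P2 pb"
proof -
  have lk: "l * k \<noteq> 0"
  proof
    assume "l * k = 0"
    then have "comb b w = 0" using assms(1,2) by (simp add: comb_smult vector_smult_assoc)
    then show False using comb_inj0 assms(3) by blast
  qed
  have "comb b w = (l * k) *s pb" using assms(1,2) by (simp add: comb_smult vector_smult_assoc)
  then show ?thesis using P2_scale[OF lk] by simp
qed

lemma part3:
  assumes P: "P \<in> gpts" and Q: "Q \<in> gpts" and PQ: "P \<noteq> Q" and sp: "special q b A P Q"
  shows "baer_conic_plus (transpose b) A \<inter> linf = {Tb. corr q Tb P \<or> corr q Tb Q}"
proof -
  obtain pv where pv: "P = P5 pv" "pv \<noteq> 0" "pv$3 = 0" "pv$4 = 0" "pv$5 = 0" using gpts_E[OF P] by blast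
  obtain qv where qv: "Q = P5 qv" "qv \<noteq> 0" "qv$3 = 0" "qv$4 = 0" "qv$5 = 0" using gpts_E[OF Q] by blast
  define pb where "pb = (vector [pv$1, pv$2, 0] :: 'a^3)"
  define qb where "qb = (vector [qv$1, qv$2, 0] :: 'a^3)"
  have pbnz: "pb \<noteq> 0"
  proof
    assume "pb = 0"
    then have "pb$1 = 0" "pb$2 = 0" by simp_all
    then have "pv = 0" using pv unfolding pb_def by (simp add: vec_eq_iff forall_5)
    then show False using pv by simp
  qed
  have qbnz: "qb \<noteq> 0"
  proof
    assume "qb = 0"
    then have "qb$1 = 0" "qb$2 = 0" by simp_all
    then have "qv = 0" using qv unfolding qb_def by (simp add: vec_eq_iff forall_5)
    then show False using qv by simp
  qed
  have rhs: "{Tb. corr q Tb P \<or> corr q Tb Q} = {P2 pb, P2 qb}"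
    unfolding pv(1) qv(1) corr_iff[OF pv(2-5)] corr_iff[OF qv(2-5)] pb_def qb_def by blast
  have pbqb: "P2 pb \<noteq> P2 qb"
  proof
    assume "P2 pb = P2 qb"
    then obtain c where c: "c \<noteq> 0" "pb = c *s qb" using P2_eq pbnz by blast
    then have "pv = c *s qv" using pv qv unfolding pb_def qb_def by (simp add: vec_eq_iff forall_5 forall_3)
    then have "P = Q" using pv(1) qv(1) P5_scale[OF c(1)] by simp
    then show False using PQ by simp
  qed
  obtain X Y where XY: "X \<in> conic4_ext q b A" "X \<in> join5 P (cpt q Q)"
      "Y \<in> conic4_ext q b A" "Y \<in> join5 (cpt q P) Q"
    using sp unfolding special_def by blast
  obtain wP kP where wP: "wP \<noteq> 0" "qf A wP = 0" "kP \<noteq> 0" "comb b wP = kP *s pb"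
    using special_pt[OF XY(1) XY(2)[unfolded pv(1) qv(1)] qv(3-5) pv(5)] unfolding pb_def by blast
  obtain wQ kQ where wQ: "wQ \<noteq> 0" "qf A wQ = 0" "kQ \<noteq> 0" "comb b wQ = kQ *s qb"
    using special_pt[OF XY(3) XY(4)[unfolded pv(1) qv(1) join5_comm[of "cpt q (P5 pv)"]] pv(3-5) qv(5)]
    unfolding qb_def by blast
  have bcp: "baer_conic_plus (transpose b) A = {P2 (comb b w) | w. w \<noteq> 0 \<and> qf A w = 0}"
    by (simp add: baer_conic_plus_def comb_mat)
  have inP: "P2 pb \<in> baer_conic_plus (transpose b) A \<inter> linf"
  proof
    have e: "P2 pb = P2 (comb b wP)" using wP(4) P2_scale[OF wP(3)] by simp
    show "P2 pb \<in> baer_conic_plus (transpose b) A" unfolding bcp mem_Collect_eq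
      by (rule exI[of _ wP]) (use wP(1,2) e in blast)
    have "pb$3 = 0" unfolding pb_def by simp
    then show "P2 pb \<in> linf" using linf_iff[OF pbnz] by blast
  qed
  have inQ: "P2 qb \<in> baer_conic_plus (transpose b) A \<inter> linf"
  proof
    have e: "P2 qb = P2 (comb b wQ)" using wQ(4) P2_scale[OF wQ(3)] by simp
    show "P2 qb \<in> baer_conic_plus (transpose b) A" unfolding bcp mem_Collect_eq
      by (rule exI[of _ wQ]) (use wQ(1,2) e in blast)
    have "qb$3 = 0" unfolding qb_def by simp
    then show "P2 qb \<in> linf" using linf_iff[OF qbnz] by blast
  qed
  have sub: "baer_conic_plus (transpose b) A \<inter> linf \<subseteq> {P2 pb, P2 qb}"
  proof
    fix T assume T: "T \<in> baer_conic_plus (transpose b) A \<inter> linf"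
    then obtain w where w: "T = P2 (comb b w)" "w \<noteq> 0" "qf A w = 0" unfolding bcp by blast
    have cnz: "comb b w \<noteq> 0" using comb_inj0 w(2) by blast
    then have "(comb b w)$3 = 0" using linf_iff T w(1) by blast
    then have "dotv be w = 0" by (simp add: comb3)
    then obtain x y where xy: "w = x *s u1 + y *s u2" using u_span by blast
    obtain xP yP where xyP: "wP = xP *s u1 + yP *s u2" using coords[OF wP(4)[unfolded pb_def]] by blast
    obtain xQ yQ where xyQ: "wQ = xQ *s u1 + yQ *s u2" using coords[OF wQ(4)[unfolded qb_def]] by blast
    show "T \<in> {P2 pb, P2 qb}"
    proof (rule ccontr)
      assume nT: "T \<notin> {P2 pb, P2 qb}"
      define a where "a = qf A u1"
      define c where "c = qf A u2"
      define m where "m = qf A (u1 + u2) - a - c"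
      have ev: "qf A (s *s u1 + t *s u2) = a * s^2 + m * s * t + c * t^2" for s t
        unfolding a_def c_def m_def qf_expand by (simp add: algebra_simps)
      have nzP: "xP \<noteq> 0 \<or> yP \<noteq> 0" using wP(1) xyP by auto
      have nzQ: "xQ \<noteq> 0 \<or> yQ \<noteq> 0" using wQ(1) xyQ by auto
      have D1: "xP * yQ - xQ * yP \<noteq> 0"
      proof
        assume "xP * yQ - xQ * yP = 0"
        then obtain l where l: "xP = l * xQ" "yP = l * yQ" using dep2 nzQ by blast
        then have "wP = l *s wQ" using xyP xyQ by (simp add: vec_eq_iff algebra_simps)
        then have "P2 (comb b wP) = P2 qb" using pt_eq wQ(4) wP(1) by blast
        moreover have "P2 (comb b wP) = P2 pb" using wP(4) P2_scale[OF wP(3)] by simp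
        ultimately show False using pbqb by simp
      qed
      have D2: "xP * y - x * yP \<noteq> 0"
      proof
        assume "xP * y - x * yP = 0"
        then have "x * yP - xP * y = 0" by (simp add: algebra_simps)
        then obtain l where l: "x = l * xP" "y = l * yP" using dep2 nzP by blast
        then have "w = l *s wP" using xy xyP by (simp add: vec_eq_iff algebra_simps)
        then have "T = P2 pb" using pt_eq wP(4) w(2) w(1) by blast
        then show False using nT by simp
      qed
      have D3: "xQ * y - x * yQ \<noteq> 0"
      proof
        assume "xQ * y - x * yQ = 0"
        then have "x * yQ - xQ * y = 0" by (simp add: algebra_simps)
        then obtain l where l: "x = l * xQ" "y = l * yQ" using dep2 nzQ by blast
        then have "w = l *s wQ" using xy xyQ by (simp add: vec_eq_iff algebra_simps)
        then have "T = P2 qb" using pt_eq wQ(4) w(2) w(1) by blast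
        then show False using nT by simp
      qed
      have z1: "a * xP^2 + m * xP * yP + c * yP^2 = 0" using ev[of xP yP] wP(2) xyP by simp
      have z2: "a * xQ^2 + m * xQ * yQ + c * yQ^2 = 0" using ev[of xQ yQ] wQ(2) xyQ by simp
      have z3: "a * x^2 + m * x * y + c * y^2 = 0" using ev[of x y] w(3) xy by simp
      note z = z1 z2 z3
      have "a = 0 \<and> m = 0 \<and> c = 0" by (rule three_zero[OF z D1 D2 D3])
      then have a0: "a = 0" and m0: "m = 0" and c0: "c = 0" by auto
      have e3: "qf A (u1 + u2) = m + a + c" unfolding m_def by simp
      have "qf A u1 = 0" using a0 unfolding a_def .
      moreover have "qf A u2 = 0" using c0 unfolding c_def .
      moreover have "qf A (u1 + u2) = 0" using e3 a0 m0 c0 by simp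
      ultimately have "qf A u1 = 0" "qf A u2 = 0" "qf A (u1 + u2) = 0" by blast+
      then have "disc A = 0" by (rule u_disc)
      then show False using N by (simp add: nondeg_conic4_def)
    qed
  qed
  show ?thesis unfolding rhs using sub inP inQ by blast
qed

end

theorem theorem5p4:
  fixes q :: nat and b A :: "'a::{field,finite} ^ 3 ^ 3"
  assumes q_pp: "\<exists>p k. prime p \<and> k \<ge> 1 \<and> q = p ^ k"
    and card: "CARD('a) = q ^ 2"
    and N: "nondeg_conic4 q b A"
    and not_inf: "\<not> plane_pts q b \<subseteq> sigma_inf q"
    and no_spread: "\<forall>T\<in>linf. \<not> spread q T \<subseteq> plane_pts q b"
  shows "\<exists>M AC.
     det M \<noteq> 0 \<and> baer_secant q (baer q M) \<and>
     bbset q (baer q M) = plane_pts q b - sigma_inf q \<and>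
     form_over q AC \<and> disc AC \<noteq> 0 \<and>
     bbset q (baer_conic q M AC) \<union>
       {p \<in> plane_pts q b. \<exists>T \<in> baer_conic q M AC \<inter> linf. p \<in> spread q T}
       = conic4 q b A \<and>
     (\<forall>T\<in>linf. (\<exists>p \<in> conic4 q b A. p \<in> spread q T) \<longrightarrow> T \<in> baer_conic q M AC) \<and>
     (\<forall>P Q. P \<in> gpts \<and> Q \<in> gpts \<and> P \<noteq> Q \<and> special q b A P Q \<longrightarrow>
        baer_conic_plus M AC \<inter> linf = {Tb. corr q Tb P \<or> corr q Tb Q})"
proof -
  interpret S: setting q b A
    unfolding setting_def using q_pp card N not_inf no_spread by blast
  have fo: "form_over q A" and dc: "disc A \<noteq> 0" using N by (simp_all add: nondeg_conic4_def)
  have p3: "\<forall>P Q. P \<in> gpts \<and> Q \<in> gpts \<and> P \<noteq> Q \<and> special q b A P Q \<longrightarrow>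
        baer_conic_plus (transpose b) A \<inter> linf = {Tb. corr q Tb P \<or> corr q Tb Q}"
    using S.part3 by blast
  show ?thesis
    apply (rule exI[of _ "transpose b"], rule exI[of _ A])
    apply (intro conjI)
    using S.det_nz apply assumption
    using S.baer_secant_M apply assumption
    using S.bbset_baer apply assumption
    using fo apply assumption
    using dc apply assumption
    using S.conic_eq apply assumption
    using S.spread_conic apply assumption
    using p3 apply assumption
    done
qed

end
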